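(* Let $n\ge1$, $m\ge1$ be integers, $q=\exp\bigl(\tfrac{2\pi i}{m+n+1}\bigr)$, and consider $$\partial^{n+1}y+(-1)^n\,(x^m+\lambda^{n+1})\,y=0,\qquad \partial=\tfrac{d}{dx},\ \lambda\in\mathbb{C}.$$ Let $y(x,\lambda)$ be a solution of this equation for each $\lambda$ (in the paper: the solution subdominant as $x\to\infty$ in the sector $|\arg x|\le\pi/(m+n+1)$), set $y_k(x,\lambda)=q^{nk/2}\,y(xq^{-k},\lambda q^k)$ for $k\in\mathbb{Z}$ (each is again a solution), and assume that for every $k$ the functions $y_k,y_{k+1},\dots,y_{k+n}$ are linearly independent. Let $\Phi_k$ be the $(n+1)\times(n+1)$ matrix whose $(i+1,j+1)$ entry is $\partial^i y_{k+j}$ ($0\le i,j\le n$), and for $\ell\ge1$ let $S^{(\ell)}_k$ be the constant matrix with $\Phi_k=\Phi_{k+\ell}S^{(\ell)}_k$; write $S^{(\ell)}(\lambda)$ for $S^{(\ell)}_0$ regarded as a function of $\lambda$, so that $S^{(\ell)}_k=S^{(\ell)}(\lambda q^k)$, and let $S^{(\ell)}_{i,j}(\lambda)$ denote its entries. Define $T^{(1)}_\ell(\lambda)=S^{(\ell)}_{1,1}(\lambda q^{-(\ell-1)/2})$ for $\ell\ge1$, $T^{(1)}_0=1$, $T^{(1)}_\ell=0$ for $\ell<0$. For a Young diagram $\mu=(\mu_1,\mu_2,\dots)$ with transpose $\mu'$ define $$T_\mu(\lambda)=\det_{1\le i,j\le\mu'_1}\Bigl(T^{(1)}_{\mu_i-i+j}\bigl(\lambda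 q^{-(\mu'_1-\mu_1+\mu_i-i-j+1)/2}\bigr)\Bigr).$$ Then for every $\ell\ge1$ and every $1\le k\le n+1$, $$S^{(\ell)}_{k,1}(\lambda)=(-1)^{k+1}\,T_\mu\bigl(q^{(\ell+k-2)/2}\lambda\bigr),$$ where $\mu=(\ell,1,\dots,1)$ is the hook-shaped Young diagram of first row length $\ell$ and height $k$.
   Context: Fractional powers $q^{s}$ mean $\exp\bigl(\tfrac{2\pi i s}{m+n+1}\bigr)$. The Stokes matrix $S^{(1)}_k$ connects the fundamental systems $\Phi_k$ and $\Phi_{k+1}$; the generalized Stokes matrix $S^{(\ell)}_k$ connects $\Phi_k$ and $\Phi_{k+\ell}$. *)

theory Defs
  imports "HOL-Analysis.Complex_Analysis_Basics" "Jordan_Normal_Form.Determinant"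
begin

text \<open>Fractional powers of q = exp(2 pi i/(m+n+1)): qpow n m s = exp(2 pi i s/(m+n+1)).\<close>
definition qpow :: "nat \<Rightarrow> nat \<Rightarrow> real \<Rightarrow> complex" where
  "qpow n m s = exp (2 * of_real pi * \<i> * of_real s / of_nat (m + n + 1))"

definition ysh :: "nat \<Rightarrow> nat \<Rightarrow> (complex \<Rightarrow> complex \<Rightarrow> complex) \<Rightarrow> int \<Rightarrow> complex \<Rightarrow> complex \<Rightarrow> complex" where
  "ysh n m y k x lam =
     qpow n m (real n * of_int k / 2) * y (x * qpow n m (- of_int k)) (lam * qpow n m (of_int k))"

definition Phi :: "nat \<Rightarrow> nat \<Rightarrow> (complex \<Rightarrow> complex \<Rightarrow> complex) \<Rightarrow> int \<Rightarrow> complex \<Rightarrow> complex \<Rightarrow> complex mat" where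
  "Phi n m y k lam x = mat (n+1) (n+1) (\<lambda>(i,j). (deriv ^^ i) (\<lambda>z. ysh n m y (k + int j) z lam) x)"

definition Stokes :: "nat \<Rightarrow> nat \<Rightarrow> (complex \<Rightarrow> complex \<Rightarrow> complex) \<Rightarrow> nat \<Rightarrow> int \<Rightarrow> complex \<Rightarrow> complex mat" where
  "Stokes n m y l k lam = (THE S. S \<in> carrier_mat (n+1) (n+1) \<and>
      (\<forall>x. Phi n m y k lam x = Phi n m y (k + int l) lam x * S))"

definition Sfun :: "nat \<Rightarrow> nat \<Rightarrow> (complex \<Rightarrow> complex \<Rightarrow> complex) \<Rightarrow> nat \<Rightarrow> complex \<Rightarrow> complex mat" where
  "Sfun n m y l lam = Stokes n m y l 0 lam"

definition T1 :: "nat \<Rightarrow> nat \<Rightarrow> (complex \<Rightarrow> complex \<Rightarrow> complex) \<Rightarrow> int \<Rightarrow> complex \<Rightarrow> complex" where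
  "T1 n m y l lam =
    (if l \<ge> 1 then Sfun n m y (nat l) (lam * qpow n m (- (of_int l - 1) / 2)) $$ (0,0)
     else if l = 0 then 1 else 0)"

text \<open>Young diagram mu as the list of its (positive) row lengths mu_1 >= mu_2 >= ...;
  mu'_1 = length mu. Matrix indices below are 0-based (i0 = i-1, j0 = j-1).\<close>
definition young_diagram :: "nat list \<Rightarrow> bool" where
  "young_diagram mu \<longleftrightarrow> sorted_wrt (\<ge>) mu \<and> 0 \<notin> set mu"

definition Tmu :: "nat \<Rightarrow> nat \<Rightarrow> (complex \<Rightarrow> complex \<Rightarrow> complex) \<Rightarrow> nat list \<Rightarrow> complex \<Rightarrow> complex" where
  "Tmu n m y mu lam = (let r = length mu in
     det (mat r r (\<lambda>(i,j).
       T1 n m y (int (mu ! i) - int (i+1) + int (j+1))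
          (lam * qpow n m (- (real r - real (mu ! 0) + real (mu ! i)
                               - real (i+1) - real (j+1) + 1) / 2)))))"

definition hook :: "nat \<Rightarrow> nat \<Rightarrow> nat list" where
  "hook l k = l # replicate (k - 1) 1"

end

theory Submission imports Defs "HOL-Complex_Analysis.Complex_Analysis" begin

lemma qpow_add: "qpow n m a * qpow n m b = qpow n m (a + b)"
  unfolding qpow_def by (simp add: exp_add[symmetric] add_divide_distrib distrib_left distrib_right)

lemma qpow_0[simp]: "qpow n m 0 = 1"
  unfolding qpow_def by simp

lemma qpow_nz[simp]: "qpow n m a \<noteq> 0"
  unfolding qpow_def by simp

lemma qpow_pow_int: "qpow n m (of_int j) ^ (m + n + 1) = 1"
proof -
  have "qpow n m (of_int j) ^ (m + n + 1) = exp (of_nat (m+n+1) * (2 * of_real pi * \<i> * of_real (of_int j) / of_nat (m + n + 1)))"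
    unfolding qpow_def by (rule exp_of_nat_mult[symmetric])
  also have "\<dots> = exp ((2 * complex_of_int j * pi) * \<i>)"
  proof -
    have nz: "(of_nat (m+n+1) :: complex) \<noteq> 0" by (metis add_eq_0_iff_both_eq_0 of_nat_eq_0_iff one_neq_zero)
    have "of_nat (m+n+1) * (2 * of_real pi * \<i> * of_real (of_int j) / of_nat (m + n + 1)) = (2 * of_real pi * \<i> * of_real (of_int j) :: complex)"
      using nz by simp
    then show ?thesis by (simp add: mult_ac)
  qed
  also have "\<dots> = 1" using exp_integer_2pi[of "of_int j"] by (simp add: mult_ac)
  finally show ?thesis .
qed

lemma ysh_shift:
  "ysh n m y (t + j) x lam = qpow n m (real n * of_int t / 2) *
      ysh n m y j (x * qpow n m (- of_int t)) (lam * qpow n m (of_int t))"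
proof -
  have e1: "qpow n m (real n * of_int t / 2) * qpow n m (real n * of_int j / 2) = qpow n m (real n * of_int (t+j) / 2)"
    by (simp add: qpow_add field_simps)
  have e2: "x * qpow n m (- of_int t) * qpow n m (- of_int j) = x * qpow n m (- of_int (t+j))"
    by (simp add: mult.assoc qpow_add)
  have e3: "lam * qpow n m (of_int t) * qpow n m (of_int j) = lam * qpow n m (of_int (t+j))"
    by (simp add: mult.assoc qpow_add)
  show ?thesis unfolding ysh_def
    by (simp only: e2 e3 mult.assoc[symmetric] e1)
qed

lemma hd_scale:
  fixes f :: "complex \<Rightarrow> complex"
  assumes "f holomorphic_on UNIV"
  shows "(deriv ^^ p) (\<lambda>z. A * f (z * w)) x = A * w ^ p * (deriv ^^ p) f (x * w)"
proof -
  have h: "(\<lambda>z. f (w * z)) holomorphic_on UNIV"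
    using holomorphic_on_compose[of "\<lambda>z. w * z" UNIV f, unfolded o_def] assms
    by (auto intro: holomorphic_intros holomorphic_on_subset)
  have "(deriv ^^ p) (\<lambda>z. A * f (z * w)) x = (deriv ^^ p) (\<lambda>z. A * f (w * z)) x"
    by (simp add: mult.commute)
  also have "\<dots> = A * (deriv ^^ p) (\<lambda>z. f (w * z)) x"
    by (rule higher_deriv_cmult[OF h UNIV_I open_UNIV])
  also have "(deriv ^^ p) (\<lambda>z. f (w * z)) x = w ^ p * (deriv ^^ p) f (w * x)"
    by (rule higher_deriv_compose_linear[OF assms open_UNIV open_UNIV UNIV_I]) auto
  finally show ?thesis by (simp add: mult.commute mult.assoc)
qed

lemma hd_sum:
  fixes f :: "'i \<Rightarrow> complex \<Rightarrow> complex"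
  assumes "finite I" "\<forall>i\<in>I. f i holomorphic_on UNIV"
  shows "(deriv ^^ p) (\<lambda>x. \<Sum>i\<in>I. c i * f i x) z = (\<Sum>i\<in>I. c i * (deriv ^^ p) (f i) z)"
  using assms
proof (induction I rule: finite_induct)
  case empty
  then show ?case by simp
next
  case (insert a I)
  have h1: "(\<lambda>x. c a * f a x) holomorphic_on UNIV"
    using insert by (auto intro: holomorphic_intros)
  have h2: "(\<lambda>x. \<Sum>i\<in>I. c i * f i x) holomorphic_on UNIV"
    using insert by (auto intro!: holomorphic_intros)
  have "(deriv ^^ p) (\<lambda>x. \<Sum>i\<in>insert a I. c i * f i x) z
      = (deriv ^^ p) (\<lambda>x. c a * f a x + (\<Sum>i\<in>I. c i * f i x)) z"
    using insert by simp
  also have "\<dots> = (deriv ^^ p) (\<lambda>x. c a * f a x) z + (deriv ^^ p) (\<lambda>x. \<Sum>i\<in>I. c i * f i x) z"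
    by (rule higher_deriv_add[OF h1 h2]) auto
  also have "(deriv ^^ p) (\<lambda>x. c a * f a x) z = c a * (deriv ^^ p) (f a) z"
    using insert by (intro higher_deriv_cmult) auto
  finally show ?case using insert by simp
qed

lemma ode_zero:
  fixes g P :: "complex \<Rightarrow> complex"
  assumes hg: "g holomorphic_on UNIV" and hP: "P holomorphic_on UNIV"
    and ode: "\<forall>x. (deriv ^^ Suc n) g x = P x * g x"
    and init: "\<forall>i\<le>n. (deriv ^^ i) g 0 = 0"
  shows "g x = 0"
proof -
  have all: "(deriv ^^ i) g 0 = 0" for i
  proof (induction i rule: less_induct)
    case (less i)
    show ?case
    proof (cases "i \<le> n")
      case True then show ?thesis using init by auto
    next
      case False
      then obtain r where r: "i = r + Suc n" by (metis add.commute le_Suc_ex not_less_eq_eq)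
      have eqf: "(deriv ^^ Suc n) g = (\<lambda>x. P x * g x)" using ode by auto
      have "(deriv ^^ i) g 0 = (deriv ^^ r) ((deriv ^^ Suc n) g) 0"
        unfolding r funpow_add by simp
      also have "\<dots> = (deriv ^^ r) (\<lambda>x. P x * g x) 0" by (simp only: eqf)
      also have "\<dots> = (\<Sum>j = 0..r. of_nat (r choose j) * (deriv ^^ j) P 0 * (deriv ^^ (r-j)) g 0)"
        by (rule higher_deriv_mult[OF hP hg]) auto
      also have "\<dots> = 0"
        using less r by (intro sum.neutral) auto
      finally show ?thesis .
    qed
  qed
  have "g holomorphic_on ball 0 (norm x + 1)" using hg by (auto intro: holomorphic_on_subset)
  moreover have "x \<in> ball 0 (norm x + 1)" by auto
  ultimately show ?thesis using holomorphic_fun_eq_0_on_ball all by blast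
qed


lemma sum_delta_nat:
  fixes F :: "nat \<Rightarrow> 'a::comm_ring_1"
  assumes "a \<le> n"
  shows "(\<Sum>p\<le>n. (if p = a then 1 else 0) * F p) = F a"
proof -
  have "(\<Sum>p\<le>n. (if p = a then 1 else 0) * F p) = (\<Sum>p\<le>n. if p = a then F p else 0)"
    by (rule sum.cong) auto
  also have "\<dots> = F a" using assms by (simp add: sum.delta)
  finally show ?thesis .
qed

definition Rel :: "nat \<Rightarrow> nat \<Rightarrow> (complex \<Rightarrow> complex \<Rightarrow> complex) \<Rightarrow> nat \<Rightarrow> int \<Rightarrow> complex \<Rightarrow> complex mat \<Rightarrow> bool" where
  "Rel n m y l k lam S \<longleftrightarrow> S \<in> carrier_mat (n+1) (n+1) \<and>
     (\<forall>x. \<forall>j\<le>n. ysh n m y (k + int j) x lam = (\<Sum>p\<le>n. S $$ (p,j) * ysh n m y (k + int l + int p) x lam))"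

definition PP :: "nat \<Rightarrow> nat \<Rightarrow> complex \<Rightarrow> complex \<Rightarrow> complex" where
  "PP n m lam x = - ((-1) ^ n * (x ^ m + lam ^ (n+1)))"

lemma PP_holo: "PP n m lam holomorphic_on UNIV"
  unfolding PP_def by (auto intro!: holomorphic_intros)

locale stk =
  fixes n m :: nat and y :: "complex \<Rightarrow> complex \<Rightarrow> complex"
  assumes entire: "\<forall>lam. (\<lambda>z. y z lam) holomorphic_on UNIV"
    and ode: "\<forall>lam x. (deriv ^^ (n+1)) (\<lambda>z. y z lam) x
                       + (-1) ^ n * (x ^ m + lam ^ (n+1)) * y x lam = 0"
    and indep: "\<forall>lam k (c :: nat \<Rightarrow> complex).
                  (\<forall>x. (\<Sum>j\<le>n. c j * ysh n m y (k + int j) x lam) = 0) \<longrightarrow> (\<forall>j\<le>n. c j = 0)"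
begin

lemma ysh_holo: "(\<lambda>x. ysh n m y j x lam) holomorphic_on UNIV"
proof -
  let ?w = "qpow n m (- of_int j)" and ?mu = "lam * qpow n m (of_int j)"
  have "(\<lambda>z. y z ?mu) holomorphic_on UNIV" using entire by auto
  then have "(\<lambda>x. y (?w * x) ?mu) holomorphic_on UNIV"
    using holomorphic_on_compose[of "\<lambda>x. ?w * x" UNIV "\<lambda>z. y z ?mu", unfolded o_def]
    by (auto intro: holomorphic_intros holomorphic_on_subset)
  then have "(\<lambda>x. y (x * ?w) ?mu) holomorphic_on UNIV" by (simp add: mult.commute)
  then show ?thesis unfolding ysh_def by (auto intro: holomorphic_intros)
qed

lemma ysh_ode: "(deriv ^^ Suc n) (\<lambda>x. ysh n m y j x lam) x = PP n m lam x * ysh n m y j x lam"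
proof -
  define w where "w = qpow n m (- of_int j)"
  define mu where "mu = lam * qpow n m (of_int j)"
  define A where "A = qpow n m (real n * of_int j / 2)"
  have f: "(\<lambda>z. y z mu) holomorphic_on UNIV" using entire by auto
  have yd: "(\<lambda>x. ysh n m y j x lam) = (\<lambda>x. A * y (x * w) mu)"
    unfolding ysh_def A_def w_def mu_def by simp
  have "(deriv ^^ Suc n) (\<lambda>x. A * y (x * w) mu) x = A * w ^ Suc n * (deriv ^^ Suc n) (\<lambda>z. y z mu) (x * w)"
    by (rule hd_scale[OF f])
  also have "(deriv ^^ Suc n) (\<lambda>z. y z mu) (x * w) = - ((-1) ^ n * ((x*w) ^ m + mu ^ (n+1)) * y (x*w) mu)"
    using ode[rule_format, of mu "x*w"] by (simp add: eq_neg_iff_add_eq_0)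
  also have w1: "w * qpow n m (of_int j) = 1" unfolding w_def by (simp add: qpow_add)
  have w2: "w ^ (m+n+1) = 1" using qpow_pow_int[of n m "-j"] unfolding w_def by simp
  have key: "w ^ Suc n * ((x*w) ^ m + mu ^ (n+1)) = x ^ m + lam ^ (n+1)"
  proof -
    have "w ^ Suc n * (x*w) ^ m = x ^ m * (w ^ m * w ^ Suc n)"
      by (simp add: power_mult_distrib mult_ac)
    also have "w ^ m * w ^ Suc n = w ^ (m+n+1)" by (simp add: power_add[symmetric])
    finally have "w ^ Suc n * (x*w) ^ m = x ^ m * w ^ (m+n+1)" .
    moreover have "w ^ Suc n * mu ^ (n+1) = (lam * (w * qpow n m (of_int j))) ^ (n+1)"
      unfolding mu_def by (simp add: power_mult_distrib mult_ac)
    ultimately show ?thesis using w1 w2 by (simp only: distrib_left) simp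
  qed
  have "A * w ^ Suc n * - ((-1) ^ n * ((x*w) ^ m + mu ^ (n+1)) * y (x*w) mu)
      = - ((-1) ^ n * (w ^ Suc n * ((x*w) ^ m + mu ^ (n+1)))) * (A * y (x*w) mu)"
    by (simp add: mult_ac)
  also have "\<dots> = PP n m lam x * (A * y (x*w) mu)" unfolding key PP_def by simp
  moreover have yx: "ysh n m y j x lam = A * y (x*w) mu" using yd by metis
  ultimately show ?thesis by (simp only: yd yx)
qed

lemma lin_holo: "finite I \<Longrightarrow> (\<lambda>x. \<Sum>i\<in>I. c i * ysh n m y (g i) x lam) holomorphic_on UNIV"
  using ysh_holo by (auto intro!: holomorphic_intros)

lemma lin_ode:
  assumes "finite I"
  shows "(deriv ^^ Suc n) (\<lambda>x. \<Sum>i\<in>I. c i * ysh n m y (g i) x lam) x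
           = PP n m lam x * (\<Sum>i\<in>I. c i * ysh n m y (g i) x lam)"
proof -
  have "(deriv ^^ Suc n) (\<lambda>x. \<Sum>i\<in>I. c i * ysh n m y (g i) x lam) x
     = (\<Sum>i\<in>I. c i * (deriv ^^ Suc n) (\<lambda>x. ysh n m y (g i) x lam) x)"
    by (rule hd_sum[OF assms]) (use ysh_holo in auto)
  also have "\<dots> = PP n m lam x * (\<Sum>i\<in>I. c i * ysh n m y (g i) x lam)"
    by (simp add: ysh_ode sum_distrib_left mult_ac del: funpow.simps)
  finally show ?thesis .
qed

lemma coef_unique:
  assumes "\<forall>x. (\<Sum>p\<le>n. a p * ysh n m y (t + int p) x lam) = (\<Sum>p\<le>n. b p * ysh n m y (t + int p) x lam)"
    and "p \<le> n"
  shows "a p = b p"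
proof -
  have "\<forall>x. (\<Sum>j\<le>n. (a j - b j) * ysh n m y (t + int j) x lam) = 0"
    using assms(1) by (simp add: left_diff_distrib sum_subtractf)
  then show ?thesis using indep assms(2) by fastforce
qed

lemma span1: "\<exists>c. \<forall>x. ysh n m y k x lam = (\<Sum>p\<le>n. c p * ysh n m y (k + 1 + int p) x lam)"
proof -
  define A where "A = mat (n+2) (n+2) (\<lambda>(i,j). if i \<le> n then (deriv ^^ i) (\<lambda>x. ysh n m y (k + int j) x lam) 0 else 0)"
  have Ac: "A \<in> carrier_mat (n+2) (n+2)" unfolding A_def by simp
  have "Determinant.det A = (\<Sum>j<n+2. A $$ (n+1,j) * Determinant.cofactor A (n+1) j)"
    by (rule laplace_expansion_row[OF Ac]) simp
  also have "\<dots> = 0" unfolding A_def by (intro sum.neutral) auto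
  finally have "Determinant.det A = 0" .
  then obtain v where v: "v \<in> carrier_vec (n+2)" "v \<noteq> 0\<^sub>v (n+2)" "A *\<^sub>v v = 0\<^sub>v (n+2)"
    using det_0_iff_vec_prod_zero[OF Ac] by blast
  define g where "g = (\<lambda>x. \<Sum>j<n+2. v $ j * ysh n m y (k + int j) x lam)"
  have gh: "g holomorphic_on UNIV" unfolding g_def by (rule lin_holo) simp
  have go: "\<forall>x. (deriv ^^ Suc n) g x = PP n m lam x * g x" unfolding g_def by (intro allI lin_ode) simp
  have init: "\<forall>i\<le>n. (deriv ^^ i) g 0 = 0"
  proof (intro allI impI)
    fix i assume i: "i \<le> n"
    have "(deriv ^^ i) g 0 = (\<Sum>j<n+2. v $ j * (deriv ^^ i) (\<lambda>x. ysh n m y (k + int j) x lam) 0)"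
      unfolding g_def using hd_sum[of "{..<n+2}" "\<lambda>j x. ysh n m y (k + int j) x lam"] ysh_holo by auto
    also have "\<dots> = (A *\<^sub>v v) $ i"
      using v(1) i unfolding A_def by (auto simp: scalar_prod_def mult_ac atLeast0LessThan intro!: sum.cong)
    also have "\<dots> = 0" using v(3) i by simp
    finally show "(deriv ^^ i) g 0 = 0" .
  qed
  have g0: "g x = 0" for x by (rule ode_zero[OF gh PP_holo go init])
  have gsplit: "g x = v $ 0 * ysh n m y k x lam + (\<Sum>p\<le>n. v $ Suc p * ysh n m y (k + 1 + int p) x lam)" for x
    unfolding g_def by (simp add: sum.lessThan_Suc_shift lessThan_Suc_atMost[symmetric] add.assoc del: sum.lessThan_Suc)
  have v0: "v $ 0 \<noteq> 0"
  proof
    assume z: "v $ 0 = 0"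
    have "\<forall>x. (\<Sum>p\<le>n. v $ Suc p * ysh n m y (k + 1 + int p) x lam) = 0"
      using gsplit g0 z by simp
    then have "\<forall>p\<le>n. v $ Suc p = 0"
      using indep[THEN spec[of _ lam], THEN spec[of _ "k+1"], THEN spec[of _ "\<lambda>p. v $ Suc p"]] by simp
    then have "v = 0\<^sub>v (n+2)"
      using z v(1) by (intro eq_vecI) (auto, metis Suc_less_eq less_Suc_eq_le not0_implies_Suc)
    with v(2) show False by simp
  qed
  show ?thesis
  proof (intro exI allI)
    fix x
    have "v $ 0 * ysh n m y k x lam = - (\<Sum>p\<le>n. v $ Suc p * ysh n m y (k + 1 + int p) x lam)"
      using gsplit[of x] g0[of x] by (simp add: eq_neg_iff_add_eq_0)
    then show "ysh n m y k x lam = (\<Sum>p\<le>n. (- v $ Suc p / v $ 0) * ysh n m y (k + 1 + int p) x lam)"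
      using v0 by (simp add: sum_divide_distrib[symmetric] field_simps sum_negf)
  qed
qed


lemma rel1: "\<exists>S. Rel n m y 1 k lam S"
proof -
  obtain c where c: "\<forall>x. ysh n m y k x lam = (\<Sum>p\<le>n. c p * ysh n m y (k + 1 + int p) x lam)"
    using span1 by blast
  define S where "S = mat (n+1) (n+1) (\<lambda>(p,j). if j = 0 then c p else if p = j - 1 then 1 else 0)"
  have "Rel n m y 1 k lam S"
    unfolding Rel_def
  proof (intro conjI allI impI)
    show "S \<in> carrier_mat (n+1) (n+1)" unfolding S_def by simp
    fix x j assume j: "j \<le> n"
    show "ysh n m y (k + int j) x lam = (\<Sum>p\<le>n. S $$ (p,j) * ysh n m y (k + int 1 + int p) x lam)"
    proof (cases "j = 0")
      case True
      have "(\<Sum>p\<le>n. S $$ (p,j) * ysh n m y (k + int 1 + int p) x lam) = (\<Sum>p\<le>n. c p * ysh n m y (k + 1 + int p) x lam)"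
        using True by (intro sum.cong) (auto simp: S_def)
      then show ?thesis using c True by simp
    next
      case False
      have "(\<Sum>p\<le>n. S $$ (p,j) * ysh n m y (k + int 1 + int p) x lam)
          = (\<Sum>p\<le>n. (if p = j - 1 then 1 else 0) * ysh n m y (k + int 1 + int p) x lam)"
        using False j by (intro sum.cong) (auto simp: S_def)
      also have "\<dots> = ysh n m y (k + int 1 + int (j - 1)) x lam"
        using j by (intro sum_delta_nat) simp
      also have "k + int 1 + int (j - 1) = k + int j" using False by simp
      finally show ?thesis by simp
    qed
  qed
  then show ?thesis by blast
qed

lemma rel0: "Rel n m y 0 k lam (1\<^sub>m (n+1))"
  unfolding Rel_def
proof (intro conjI allI impI)
  fix x j assume j: "j \<le> n"
  have "(\<Sum>p\<le>n. 1\<^sub>m (n+1) $$ (p,j) * ysh n m y (k + int 0 + int p) x lam)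
      = (\<Sum>p\<le>n. (if p = j then 1 else 0) * ysh n m y (k + int 0 + int p) x lam)"
    using j by (intro sum.cong) auto
  also have "\<dots> = ysh n m y (k + int 0 + int j) x lam" using j by (rule sum_delta_nat)
  finally show "ysh n m y (k + int j) x lam = (\<Sum>p\<le>n. 1\<^sub>m (n+1) $$ (p,j) * ysh n m y (k + int 0 + int p) x lam)"
    by simp
qed simp

lemma rel_comp:
  assumes r1: "Rel n m y a k lam S1" and r2: "Rel n m y b (k + int a) lam S2"
  shows "Rel n m y (a+b) k lam (S2 * S1)"
  unfolding Rel_def
proof (intro conjI allI impI)
  have c1: "S1 \<in> carrier_mat (n+1) (n+1)" and c2: "S2 \<in> carrier_mat (n+1) (n+1)"
    using r1 r2 unfolding Rel_def by auto
  then show "S2 * S1 \<in> carrier_mat (n+1) (n+1)" by simp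
  fix x j assume j: "j \<le> n"
  have "ysh n m y (k + int j) x lam = (\<Sum>p\<le>n. S1 $$ (p,j) * ysh n m y (k + int a + int p) x lam)"
    using r1 j unfolding Rel_def by blast
  also have "\<dots> = (\<Sum>p\<le>n. S1 $$ (p,j) * (\<Sum>r\<le>n. S2 $$ (r,p) * ysh n m y (k + int a + int b + int r) x lam))"
    using r2 unfolding Rel_def by (intro sum.cong) auto
  also have "\<dots> = (\<Sum>p\<le>n. \<Sum>r\<le>n. S1 $$ (p,j) * (S2 $$ (r,p) * ysh n m y (k + int a + int b + int r) x lam))"
    by (simp add: sum_distrib_left)
  also have "\<dots> = (\<Sum>r\<le>n. \<Sum>p\<le>n. S1 $$ (p,j) * (S2 $$ (r,p) * ysh n m y (k + int a + int b + int r) x lam))"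
    by (rule sum.swap)
  also have "\<dots> = (\<Sum>r\<le>n. (\<Sum>p\<le>n. S2 $$ (r,p) * S1 $$ (p,j)) * ysh n m y (k + int a + int b + int r) x lam)"
    by (simp add: sum_distrib_right mult_ac)
  also have "\<dots> = (\<Sum>r\<le>n. (S2 * S1) $$ (r,j) * ysh n m y (k + int (a+b) + int r) x lam)"
  proof (intro sum.cong refl)
    fix r assume r: "r \<in> {..n}"
    have "(S2 * S1) $$ (r,j) = (\<Sum>p\<le>n. S2 $$ (r,p) * S1 $$ (p,j))"
      using c1 c2 r j by (simp add: scalar_prod_def atLeast0LessThan lessThan_Suc_atMost)
    then show "(\<Sum>p\<le>n. S2 $$ (r,p) * S1 $$ (p,j)) * ysh n m y (k + int a + int b + int r) x lam
        = (S2 * S1) $$ (r,j) * ysh n m y (k + int (a+b) + int r) x lam" by (simp add: add.assoc)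
  qed
  finally show "ysh n m y (k + int j) x lam = (\<Sum>r\<le>n. (S2 * S1) $$ (r,j) * ysh n m y (k + int (a+b) + int r) x lam)" .
qed

lemma rel_ex: "\<exists>S. Rel n m y l k lam S"
proof (induction l)
  case 0 then show ?case using rel0 by blast
next
  case (Suc l)
  then obtain S1 where "Rel n m y l k lam S1" by blast
  moreover obtain S2 where "Rel n m y 1 (k + int l) lam S2" using rel1 by blast
  ultimately have "Rel n m y (l+1) k lam (S2 * S1)" by (rule rel_comp)
  then show ?case by auto
qed

lemma stokes_eq:
  assumes r: "Rel n m y l k lam S"
  shows "Stokes n m y l k lam = S"
  unfolding Stokes_def
proof (rule the_equality)
  have c: "S \<in> carrier_mat (n+1) (n+1)" using r unfolding Rel_def by auto
  have rr: "\<And>x j. j \<le> n \<Longrightarrow> ysh n m y (k + int j) x lam = (\<Sum>p\<le>n. S $$ (p,j) * ysh n m y (k + int l + int p) x lam)"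
    using r unfolding Rel_def by auto
  show "S \<in> carrier_mat (n + 1) (n + 1) \<and> (\<forall>x. Phi n m y k lam x = Phi n m y (k + int l) lam x * S)"
  proof (intro conjI allI)
    show "S \<in> carrier_mat (n + 1) (n + 1)" by fact
    fix x
    show "Phi n m y k lam x = Phi n m y (k + int l) lam x * S"
    proof (rule eq_matI)
      fix i j assume i: "i < dim_row (Phi n m y (k + int l) lam x * S)" and j: "j < dim_col (Phi n m y (k + int l) lam x * S)"
      have i': "i < n+1" and j': "j < n+1" using i j c by (auto simp: Phi_def)
      have fe: "(\<lambda>z. ysh n m y (k + int j) z lam) = (\<lambda>z. \<Sum>p\<le>n. S $$ (p,j) * ysh n m y (k + int l + int p) z lam)"
        using rr j' by auto
      have "Phi n m y k lam x $$ (i,j) = (deriv ^^ i) (\<lambda>z. ysh n m y (k + int j) z lam) x"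
        using i' j' by (simp add: Phi_def)
      also have "\<dots> = (\<Sum>p\<le>n. S $$ (p,j) * (deriv ^^ i) (\<lambda>z. ysh n m y (k + int l + int p) z lam) x)"
        unfolding fe by (rule hd_sum) (use ysh_holo in auto)
      also have "\<dots> = (Phi n m y (k + int l) lam x * S) $$ (i,j)"
        using i' j' c by (simp add: Phi_def scalar_prod_def atLeast0LessThan lessThan_Suc_atMost mult_ac)
      finally show "Phi n m y k lam x $$ (i,j) = (Phi n m y (k + int l) lam x * S) $$ (i,j)" .
    qed (use c in \<open>auto simp: Phi_def\<close>)
  qed
  fix S' assume S': "S' \<in> carrier_mat (n + 1) (n + 1) \<and> (\<forall>x. Phi n m y k lam x = Phi n m y (k + int l) lam x * S')"
  show "S' = S"
  proof (rule eq_matI)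
    fix p j assume p: "p < dim_row S" and j: "j < dim_col S"
    have p': "p \<le> n" and j': "j \<le> n" using p j c by auto
    have dS: "dim_row S' = n+1" "dim_col S' = n+1" using S' by auto
    have "\<forall>x. (\<Sum>q\<le>n. S' $$ (q,j) * ysh n m y (k + int l + int q) x lam) = (\<Sum>q\<le>n. S $$ (q,j) * ysh n m y (k + int l + int q) x lam)"
    proof
      fix x
      have "ysh n m y (k + int j) x lam = Phi n m y k lam x $$ (0,j)" using j' by (simp add: Phi_def)
      also have "\<dots> = (Phi n m y (k + int l) lam x * S') $$ (0,j)" using S' by simp
      also have "\<dots> = (\<Sum>q\<le>n. S' $$ (q,j) * ysh n m y (k + int l + int q) x lam)"
        using j' dS by (simp add: Phi_def scalar_prod_def atLeast0LessThan lessThan_Suc_atMost mult_ac)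
      finally show "(\<Sum>q\<le>n. S' $$ (q,j) * ysh n m y (k + int l + int q) x lam) = (\<Sum>q\<le>n. S $$ (q,j) * ysh n m y (k + int l + int q) x lam)"
        using rr[OF j'] by simp
    qed
    then show "S' $$ (p,j) = S $$ (p,j)" using coef_unique[of "\<lambda>q. S' $$ (q,j)" "k + int l" lam "\<lambda>q. S $$ (q,j)" p] p' by blast
  qed (use S' c in auto)
qed

lemma stokes_rel: "Rel n m y l k lam (Stokes n m y l k lam)"
  using rel_ex stokes_eq by metis

lemma stokes_carrier: "Stokes n m y l k lam \<in> carrier_mat (n+1) (n+1)"
  using stokes_rel unfolding Rel_def by auto

lemma stokes_0: "Stokes n m y 0 k lam = 1\<^sub>m (n+1)"
  using rel0 stokes_eq by blast

lemma stokes_comp: "Stokes n m y (a+b) k lam = Stokes n m y b (k + int a) lam * Stokes n m y a k lam"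
  using rel_comp[OF stokes_rel stokes_rel] stokes_eq by blast

lemma stokes_1_shift:
  assumes "1 \<le> j" "j \<le> n" "p \<le> n"
  shows "Stokes n m y 1 k lam $$ (p,j) = (if p = j - 1 then 1 else 0)"
proof -
  let ?S = "Stokes n m y 1 k lam"
  have "\<forall>x. (\<Sum>q\<le>n. ?S $$ (q,j) * ysh n m y (k + 1 + int q) x lam)
        = (\<Sum>q\<le>n. (if q = j - 1 then 1 else 0) * ysh n m y (k + 1 + int q) x lam)"
  proof
    fix x
    have "(\<Sum>q\<le>n. ?S $$ (q,j) * ysh n m y (k + 1 + int q) x lam) = ysh n m y (k + int j) x lam"
      using stokes_rel[of 1 k lam] assms unfolding Rel_def by simp
    also have "\<dots> = ysh n m y (k + 1 + int (j-1)) x lam" using assms by (simp add: of_nat_diff)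
    also have "\<dots> = (\<Sum>q\<le>n. (if q = j - 1 then 1 else 0) * ysh n m y (k + 1 + int q) x lam)"
      using assms by (intro sum_delta_nat[symmetric]) simp
    finally show "(\<Sum>q\<le>n. ?S $$ (q,j) * ysh n m y (k + 1 + int q) x lam)
        = (\<Sum>q\<le>n. (if q = j - 1 then 1 else 0) * ysh n m y (k + 1 + int q) x lam)" .
  qed
  then show ?thesis using coef_unique[of "\<lambda>q. ?S $$ (q,j)" "k+1" lam "\<lambda>q. if q = j - 1 then 1 else 0" p] assms(3) by blast
qed

lemma stokes_shift: "Stokes n m y l 0 (lam * qpow n m (of_int t)) = Stokes n m y l t lam"
proof -
  let ?mu = "lam * qpow n m (of_int t)" and ?c = "qpow n m (real n * of_int t / 2)" and ?w = "qpow n m (- of_int t)"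
  let ?S = "Stokes n m y l 0 ?mu"
  have r: "Rel n m y l 0 ?mu ?S" by (rule stokes_rel)
  have "Rel n m y l t lam ?S"
    unfolding Rel_def
  proof (intro conjI allI impI)
    show "?S \<in> carrier_mat (n+1) (n+1)" using r unfolding Rel_def by auto
    fix x j assume j: "j \<le> n"
    have "ysh n m y (t + int j) x lam = ?c * ysh n m y (0 + int j) (x * ?w) ?mu"
      using ysh_shift[of n m y t "int j" x lam] by simp
    also have "\<dots> = ?c * (\<Sum>p\<le>n. ?S $$ (p,j) * ysh n m y (0 + int l + int p) (x * ?w) ?mu)"
      using r j unfolding Rel_def by auto
    also have "\<dots> = (\<Sum>p\<le>n. ?S $$ (p,j) * (?c * ysh n m y (int l + int p) (x * ?w) ?mu))"
      by (simp add: sum_distrib_left mult_ac)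
    also have "\<dots> = (\<Sum>p\<le>n. ?S $$ (p,j) * ysh n m y (t + int l + int p) x lam)"
      using ysh_shift[of n m y t _ x lam] by (simp add: add.assoc)
    finally show "ysh n m y (t + int j) x lam = (\<Sum>p\<le>n. ?S $$ (p,j) * ysh n m y (t + int l + int p) x lam)" .
  qed
  then show ?thesis using stokes_eq by metis
qed


definition hh :: "complex \<Rightarrow> int \<Rightarrow> int \<Rightarrow> complex" where
  "hh lam p t = (if p \<ge> 1 then Stokes n m y (nat p) t lam $$ (0,0) else if p = 0 then 1 else 0)"

lemma row0: "j \<le> n \<Longrightarrow> Stokes n m y b s lam $$ (0,j) = hh lam (int b - int j) (s + int j)"
proof (induction b arbitrary: s j)
  case 0
  then show ?case by (simp add: stokes_0 hh_def)
next
  case (Suc b)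
  show ?case
  proof (cases "j = 0")
    case True
    have "nat (1 + int b) = Suc b" by simp
    with True show ?thesis by (simp add: hh_def)
  next
    case False
    have c1: "Stokes n m y b (s + 1) lam \<in> carrier_mat (n+1) (n+1)" by (rule stokes_carrier)
    have c2: "Stokes n m y 1 s lam \<in> carrier_mat (n+1) (n+1)" by (rule stokes_carrier)
    have "Stokes n m y (Suc b) s lam = Stokes n m y (1 + b) s lam" by simp
    also have "\<dots> = Stokes n m y b (s + 1) lam * Stokes n m y 1 s lam"
      using stokes_comp[of 1 b s lam] by simp
    finally have e: "Stokes n m y (Suc b) s lam = Stokes n m y b (s + 1) lam * Stokes n m y 1 s lam" .
    have "Stokes n m y (Suc b) s lam $$ (0,j) = (\<Sum>q\<le>n. Stokes n m y b (s + 1) lam $$ (0,q) * Stokes n m y 1 s lam $$ (q,j))"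
      unfolding e using c1 c2 Suc.prems by (simp add: scalar_prod_def atLeast0LessThan lessThan_Suc_atMost)
    also have "\<dots> = (\<Sum>q\<le>n. (if q = j - 1 then 1 else 0) * Stokes n m y b (s + 1) lam $$ (0,q))"
    proof (intro sum.cong refl)
      fix q assume q: "q \<in> {..n}"
      have "Stokes n m y 1 s lam $$ (q,j) = (if q = j - 1 then 1 else 0)"
        using stokes_1_shift[of j q s lam] False Suc.prems q by simp
      then show "Stokes n m y b (s + 1) lam $$ (0,q) * Stokes n m y 1 s lam $$ (q,j) = (if q = j - 1 then 1 else 0) * Stokes n m y b (s + 1) lam $$ (0,q)"
        by simp
    qed
    also have "\<dots> = Stokes n m y b (s + 1) lam $$ (0, j - 1)"
      using Suc.prems by (intro sum_delta_nat) simp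
    also have "\<dots> = hh lam (int b - int (j - 1)) (s + 1 + int (j - 1))"
      using Suc.prems by (intro Suc.IH) simp
    also have "\<dots> = hh lam (int (Suc b) - int j) (s + int j)"
    proof -
      have "int b - int (j - 1) = int (Suc b) - int j" "s + 1 + int (j - 1) = s + int j" using False by auto
      then show ?thesis by (simp only:)
    qed
    finally show ?thesis .
  qed
qed

lemma main_id:
  assumes "1 \<le> l" "j \<le> n"
  shows "hh lam (int l + int j) 0 = (\<Sum>p\<le>n. hh lam (int j - int p) (int l + int p) * Stokes n m y l 0 lam $$ (p,0))"
proof -
  have c1: "Stokes n m y j (0 + int l) lam \<in> carrier_mat (n+1) (n+1)" by (rule stokes_carrier)
  have c2: "Stokes n m y l 0 lam \<in> carrier_mat (n+1) (n+1)" by (rule stokes_carrier)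
  have "hh lam (int l + int j) 0 = Stokes n m y (l + j) 0 lam $$ (0,0)"
    using assms by (simp add: hh_def nat_add_distrib)
  also have "\<dots> = (Stokes n m y j (0 + int l) lam * Stokes n m y l 0 lam) $$ (0,0)"
    by (simp only: stokes_comp)
  also have "\<dots> = (\<Sum>p\<le>n. Stokes n m y j (0 + int l) lam $$ (0,p) * Stokes n m y l 0 lam $$ (p,0))"
    using c1 c2 by (simp add: scalar_prod_def atLeast0LessThan lessThan_Suc_atMost)
  also have "\<dots> = (\<Sum>p\<le>n. hh lam (int j - int p) (int l + int p) * Stokes n m y l 0 lam $$ (p,0))"
    by (intro sum.cong refl) (simp add: row0)
  finally show ?thesis .
qed

end

lemma det_G:
  fixes v :: "nat \<Rightarrow> 'a::comm_ring_1"
  assumes k: "1 \<le> k"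
  shows "Determinant.det (mat k k (\<lambda>(i,j). if i = 0 then v j else if j + 1 = i then 1 else 0)) = (-1)^(k-1) * v (k-1)"
proof -
  define G where "G = (mat k k (\<lambda>(i,j). if i = 0 then v j else if j + 1 = i then 1 else 0) :: 'a mat)"
  have Gc: "G \<in> carrier_mat k k" unfolding G_def by simp
  have "Determinant.det G = (\<Sum>i<k. G $$ (i,k-1) * Determinant.cofactor G i (k-1))"
    by (rule laplace_expansion_column[OF Gc]) (use k in simp)
  also have "\<dots> = (\<Sum>i<k. if i = 0 then G $$ (0,k-1) * Determinant.cofactor G 0 (k-1) else 0)"
    by (intro sum.cong refl) (auto simp: G_def)
  also have "\<dots> = G $$ (0,k-1) * Determinant.cofactor G 0 (k-1)" using k by (simp add: sum.delta)
  also have "mat_delete G 0 (k-1) = 1\<^sub>m (k-1)"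
    by (rule eq_matI) (auto simp: mat_delete_def G_def)
  then have "Determinant.cofactor G 0 (k-1) = (-1)^(k-1)" by (simp add: Determinant.cofactor_def)
  finally show ?thesis using k by (simp add: G_def mult.commute)
qed

context stk begin

lemma det_U: "Determinant.det (mat k k (\<lambda>(i,j). hh lam (int j - int i) (int l + int i))) = 1"
proof -
  define U where "U = mat k k (\<lambda>(i,j). hh lam (int j - int i) (int l + int i))"
  have Uc: "U \<in> carrier_mat k k" unfolding U_def by simp
  have ut: "upper_triangular U" unfolding U_def upper_triangular_def by (auto simp: hh_def)
  have "Determinant.det U = prod_list (diag_mat U)" by (rule det_upper_triangular[OF ut Uc])
  also have "\<dots> = (\<Prod>i = 0..<k. U $$ (i,i))" using Uc by (simp add: prod_list_diag_prod)
  also have "\<dots> = 1" by (intro prod.neutral) (auto simp: U_def hh_def)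
  finally show ?thesis unfolding U_def .
qed


lemma hook_0[simp]: "hook l k ! 0 = l" by (simp add: hook_def)
lemma hook_i: "1 \<le> i \<Longrightarrow> i < k \<Longrightarrow> hook l k ! i = 1"
  by (cases i) (auto simp: hook_def)
lemma hook_len: "1 \<le> k \<Longrightarrow> length (hook l k) = k" by (simp add: hook_def)

lemma M_eq:
  assumes l: "1 \<le> l" and k: "1 \<le> k" "k \<le> n + 1"
  shows "mat k k (\<lambda>(i,j). hh lam (int (hook l k ! i) - int (i+1) + int (j+1)) (int l - int (hook l k ! i) + int i))
    = mat k k (\<lambda>(i,j). if i = 0 then Stokes n m y l 0 lam $$ (j,0) else if j + 1 = i then 1 else 0)
      * mat k k (\<lambda>(i,j). hh lam (int j - int i) (int l + int i))"
    (is "?M = ?G * ?U")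
proof (rule eq_matI)
  fix i j assume i: "i < dim_row (?G * ?U)" and j: "j < dim_col (?G * ?U)"
  then have i': "i < k" and j': "j < k" by auto
  have prod: "(?G * ?U) $$ (i,j) = (\<Sum>q<k. ?G $$ (i,q) * ?U $$ (q,j))"
    using i' j' by (simp add: scalar_prod_def atLeast0LessThan)
  show "?M $$ (i,j) = (?G * ?U) $$ (i,j)"
  proof (cases "i = 0")
    case True
    have "?M $$ (i,j) = hh lam (int l + int j) 0" using True i' j' by simp
    also have "\<dots> = (\<Sum>p\<le>n. hh lam (int j - int p) (int l + int p) * Stokes n m y l 0 lam $$ (p,0))"
      using l j' k by (intro main_id) auto
    also have "\<dots> = (\<Sum>p<k. hh lam (int j - int p) (int l + int p) * Stokes n m y l 0 lam $$ (p,0))"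
      using k j' by (intro sum.mono_neutral_right) (auto simp: hh_def)
    also have "\<dots> = (?G * ?U) $$ (i,j)"
      unfolding prod using True j' by (intro sum.cong refl) (auto simp: mult.commute)
    finally show ?thesis .
  next
    case False
    have "?M $$ (i,j) = hh lam (int j - int (i - 1)) (int l + int (i - 1))"
    proof -
      have e1: "int (hook l k ! i) - int (i+1) + int (j+1) = int j - int (i - 1)"
           and e2: "int l - int (hook l k ! i) + int i = int l + int (i - 1)"
        using False i' hook_i[of i k l] by auto
      have "?M $$ (i,j) = hh lam (int (hook l k ! i) - int (i+1) + int (j+1)) (int l - int (hook l k ! i) + int i)"
        using i' j' by simp
      then show ?thesis by (simp only: e1 e2)
    qed
    also have "\<dots> = (\<Sum>q<k. if q = i - 1 then ?U $$ (q,j) else 0)"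
      using i' by (simp add: sum.delta j')
    also have "\<dots> = (?G * ?U) $$ (i,j)"
      unfolding prod using False i' j' by (intro sum.cong refl) auto
    finally show ?thesis .
  qed
qed auto

lemma arg_eq: "a + b + c = d \<Longrightarrow> qpow n m a * lam * qpow n m b * qpow n m c = lam * qpow n m d"
proof -
  assume "a + b + c = d"
  then have "qpow n m a * qpow n m b * qpow n m c = qpow n m d" by (simp add: qpow_add)
  then show ?thesis by (metis mult.assoc mult.commute)
qed

lemma Tmu_eq:
  assumes l: "1 \<le> l" and k: "1 \<le> k"
  shows "Tmu n m y (hook l k) (qpow n m ((real l + real k - 2) / 2) * lam)
    = Determinant.det (mat k k (\<lambda>(i,j). hh lam (int (hook l k ! i) - int (i+1) + int (j+1)) (int l - int (hook l k ! i) + int i)))"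
proof -
  let ?L = "qpow n m ((real l + real k - 2) / 2) * lam"
  have "mat k k (\<lambda>(i,j).
       T1 n m y (int (hook l k ! i) - int (i+1) + int (j+1))
          (?L * qpow n m (- (real k - real (hook l k ! 0) + real (hook l k ! i)
                               - real (i+1) - real (j+1) + 1) / 2)))
     = mat k k (\<lambda>(i,j). hh lam (int (hook l k ! i) - int (i+1) + int (j+1)) (int l - int (hook l k ! i) + int i))"
  proof (rule eq_matI)
    fix i j assume i: "i < dim_row (mat k k (\<lambda>(i,j). hh lam (int (hook l k ! i) - int (i+1) + int (j+1)) (int l - int (hook l k ! i) + int i)))"
      and j: "j < dim_col (mat k k (\<lambda>(i,j). hh lam (int (hook l k ! i) - int (i+1) + int (j+1)) (int l - int (hook l k ! i) + int i)))"
    define mi where "mi = hook l k ! i"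
    define p where "p = int mi - int (i+1) + int (j+1)"
    define t where "t = int l - int mi + int i"
    have ae: "?L * qpow n m (- (real k - real (hook l k ! 0) + real mi - real (i+1) - real (j+1) + 1) / 2)
         * qpow n m (- (of_int p - 1) / 2) = lam * qpow n m (of_int t)"
      by (rule arg_eq) (simp add: p_def t_def field_simps)
    have "T1 n m y p (?L * qpow n m (- (real k - real (hook l k ! 0) + real mi - real (i+1) - real (j+1) + 1) / 2))
        = hh lam p t"
      unfolding T1_def hh_def ae Sfun_def stokes_shift by simp
    then show "mat k k (\<lambda>(i,j).
       T1 n m y (int (hook l k ! i) - int (i+1) + int (j+1))
          (?L * qpow n m (- (real k - real (hook l k ! 0) + real (hook l k ! i)
                               - real (i+1) - real (j+1) + 1) / 2))) $$ (i,j)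
     = mat k k (\<lambda>(i,j). hh lam (int (hook l k ! i) - int (i+1) + int (j+1)) (int l - int (hook l k ! i) + int i)) $$ (i,j)"
      using i j unfolding mi_def p_def t_def by simp
  qed auto
  then show ?thesis unfolding Tmu_def Let_def hook_len[OF k] by simp
qed

lemma final:
  assumes l: "1 \<le> l" and k: "1 \<le> k" "k \<le> n + 1"
  shows "Sfun n m y l lam $$ (k - 1, 0)
           = (-1) ^ (k + 1) * Tmu n m y (hook l k) (qpow n m ((real l + real k - 2) / 2) * lam)"
proof -
  let ?G = "mat k k (\<lambda>(i,j). if i = 0 then Stokes n m y l 0 lam $$ (j,0) else if j + 1 = i then 1 else (0::complex))"
  let ?U = "mat k k (\<lambda>(i,j). hh lam (int j - int i) (int l + int i))"
  have "Tmu n m y (hook l k) (qpow n m ((real l + real k - 2) / 2) * lam) = Determinant.det (?G * ?U)"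
    unfolding Tmu_eq[OF l k(1)] M_eq[OF l k] ..
  also have "\<dots> = Determinant.det ?G * Determinant.det ?U"
    by (rule det_mult[of _ k]) auto
  also have "\<dots> = (-1)^(k-1) * Stokes n m y l 0 lam $$ (k-1,0)"
    using det_G[OF k(1), of "\<lambda>j. Stokes n m y l 0 lam $$ (j,0)"] det_U by simp
  finally have T: "Tmu n m y (hook l k) (qpow n m ((real l + real k - 2) / 2) * lam) = (-1)^(k-1) * Stokes n m y l 0 lam $$ (k-1,0)" .
  have s: "(-1::complex)^(k+1) * (-1)^(k-1) = 1"
  proof -
    obtain k' where "k = Suc k'" using k by (cases k) auto
    then show ?thesis by (simp add: power_add[symmetric])
  qed
  show ?thesis unfolding T Sfun_def using s by (simp add: mult.assoc[symmetric])
qed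

end

theorem theorem3:
  fixes n m :: nat and y :: "complex \<Rightarrow> complex \<Rightarrow> complex"
  assumes "n \<ge> 1" and "m \<ge> 1"
    and entire: "\<forall>lam. (\<lambda>z. y z lam) holomorphic_on UNIV"
    and ode: "\<forall>lam x. (deriv ^^ (n+1)) (\<lambda>z. y z lam) x
                       + (-1) ^ n * (x ^ m + lam ^ (n+1)) * y x lam = 0"
    and indep: "\<forall>lam k (c :: nat \<Rightarrow> complex).
                  (\<forall>x. (\<Sum>j\<le>n. c j * ysh n m y (k + int j) x lam) = 0) \<longrightarrow> (\<forall>j\<le>n. c j = 0)"
    and "l \<ge> 1" and "1 \<le> k" and "k \<le> n + 1"
  shows "Sfun n m y l lam $$ (k - 1, 0)
           = (-1) ^ (k + 1) * Tmu n m y (hook l k) (qpow n m ((real l + real k - 2) / 2) * lam)"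
proof -
  interpret stk n m y using entire ode indep by unfold_locales
  show ?thesis using final assms(6-8) by blast
qed

end
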